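(* Let $(u^\ast,W^\ast)$ be the minimizer of $f(u,W)$ (so that $u_i^\ast=\log(1+\sum_{k\ne y_i}e^{x_i^\top(w_k^\ast-w_{y_i}^\ast)})$). Then for every $i$, $u_i^\ast\le B_u$, where $B_u=\log(1+(K-1)e^{2B_xB_W})$, $B_x=\max_i\|x_i\|_2$ and $B_W^2=\frac{2}{\mu}N\log K$.
   Context: Data: $(y_i,x_i)$, $i=1,\dots,N$, $x_i\in\mathbb{R}^D$, $y_i\in\{1,\dots,K\}$, $K\ge 2$; $\mu>0$; $u\in\mathbb{R}^N$, $W=[w_1,\dots,w_K]\in\mathbb{R}^{D\times K}$ with Frobenius norm $\|W\|_2$; $$f(u,W)=\sum_{i=1}^N\Big[u_i+e^{-u_i}+\sum_{k\ne y_i}e^{x_i^\top(w_k-w_{y_i})-u_i}\Big]+\tfrac{\mu}{2}\|W\|_2^2.$$ *)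

theory Defs
  imports "HOL-Analysis.Analysis"
begin

text \<open>W is represented as a K-indexed family of columns w_k in R^D, so that W $ k = w_k and
  norm W is the Frobenius norm of the D x K matrix.\<close>

definition obj :: "real \<Rightarrow> ('n::finite \<Rightarrow> 'k::finite) \<Rightarrow> ('n \<Rightarrow> real^'d::finite)
    \<Rightarrow> real^'n \<Rightarrow> (real^'d)^'k \<Rightarrow> real" where
  "obj \<mu> y x u W =
     (\<Sum>i\<in>UNIV. u $ i + exp (- (u $ i))
        + (\<Sum>k\<in>UNIV - {y i}. exp (x i \<bullet> (W $ k - W $ (y i)) - u $ i)))
     + \<mu> / 2 * (norm W)\<^sup>2"

end

theory Submission
  imports Defs
begin

definition SS :: "('n::finite \<Rightarrow> 'k::finite) \<Rightarrow> ('n \<Rightarrow> real^'d::finite) \<Rightarrow> (real^'d)^'k \<Rightarrow> 'n \<Rightarrow> real" where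
  "SS y x W j = (\<Sum>k\<in>UNIV - {y j}. exp (x j \<bullet> (W $ k - W $ (y j))))"

lemma obj_alt:
  "obj \<mu> y x u W = (\<Sum>j\<in>UNIV. u $ j + exp (- (u $ j)) * (1 + SS y x W j)) + \<mu> / 2 * (norm W)\<^sup>2"
proof -
  have "\<And>j. (\<Sum>k\<in>UNIV - {y j}. exp (x j \<bullet> (W $ k - W $ (y j)) - u $ j))
        = exp (- (u $ j)) * SS y x W j"
    unfolding SS_def sum_distrib_left
    by (rule sum.cong) (auto simp: exp_diff exp_minus field_simps)
  then show ?thesis unfolding obj_def by (simp add: algebra_simps)
qed

lemma strict_aux:
  fixes A t :: real
  assumes "A > 0" "t > ln A"
  shows "ln A + exp (- ln A) * A < t + exp (- t) * A"
proof -
  define d where "d = t - ln A"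
  have d: "d > 0" using assms d_def by simp
  have "exp (- t) * A = exp (- d)"
    using assms by (simp add: d_def exp_diff exp_minus field_simps)
  moreover have "1 - d < exp (- d)" using exp_minus_greater[of d] d by simp
  moreover have "exp (- ln A) * A = 1" using assms by (simp add: exp_minus)
  ultimately show ?thesis unfolding d_def by simp
qed

theorem lemma2:
  fixes \<mu> :: real and y :: "'n::finite \<Rightarrow> 'k::finite" and x :: "'n \<Rightarrow> real^'d::finite"
    and us :: "real^'n" and Ws :: "(real^'d)^'k"
  assumes K2: "CARD('k) \<ge> 2"
    and mu: "\<mu> > 0"
    and minimizer: "\<forall>u W. obj \<mu> y x us Ws \<le> obj \<mu> y x u W"
  shows "\<forall>i. us $ i \<le>
     (let Bx = Max (range (\<lambda>j. norm (x j)));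
          BW = sqrt (2 / \<mu> * real CARD('n) * ln (real CARD('k)))
      in ln (1 + (real CARD('k) - 1) * exp (2 * Bx * BW)))"
proof
  fix i :: 'n
  define Bx where "Bx = Max (range (\<lambda>j. norm (x j)))"
  define BW where "BW = sqrt (2 / \<mu> * real CARD('n) * ln (real CARD('k)))"
  define K where "K = real CARD('k)"
  have K: "K \<ge> 2" using K2 unfolding K_def by simp
  define G where "G = (\<lambda>j t. t + exp (- t) * (1 + SS y x Ws j))"
  have SSpos: "\<And>j. SS y x Ws j \<ge> 0" unfolding SS_def by (auto intro: sum_nonneg)
  have u_le: "us $ i \<le> ln (1 + SS y x Ws i)"
  proof (rule ccontr)
    assume "\<not> ?thesis"
    hence gt: "us $ i > ln (1 + SS y x Ws i)" by simp
    define L where "L = ln (1 + SS y x Ws i)"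
    define u' where "u' = (\<chi> j. if j = i then L else us $ j)"
    have s1: "(\<Sum>j\<in>UNIV. G j (u' $ j)) = G i L + (\<Sum>j\<in>UNIV - {i}. G j (us $ j))"
      by (simp add: sum.remove[of UNIV i] u'_def)
    have s2: "(\<Sum>j\<in>UNIV. G j (us $ j)) = G i (us $ i) + (\<Sum>j\<in>UNIV - {i}. G j (us $ j))"
      by (simp add: sum.remove[of UNIV i])
    have "G i L < G i (us $ i)"
      unfolding G_def L_def using strict_aux[of "1 + SS y x Ws i" "us $ i"] SSpos[of i] gt
      by simp
    hence "obj \<mu> y x u' Ws < obj \<mu> y x us Ws"
      unfolding obj_alt using s1 s2 unfolding G_def by simp
    thus False using minimizer by (meson not_le)
  qed
  have Wb: "norm Ws \<le> BW"
  proof -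
    define u0 where "u0 = (\<chi> j::'n. ln K)"
    have SS0: "\<And>j. SS y x (0::(real^'d)^'k) j = K - 1"
      unfolding SS_def K_def by (simp add: card_Diff_singleton)
    have "obj \<mu> y x u0 0 = (\<Sum>j::'n\<in>UNIV. ln K + exp (- ln K) * K)"
      unfolding obj_alt SS0 u0_def by simp
    also have "\<dots> = real CARD('n) * (ln K + 1)"
      using K by (simp add: exp_minus)
    finally have o0: "obj \<mu> y x u0 0 = real CARD('n) * (ln K + 1)" .
    have "(\<Sum>j::'n\<in>UNIV. 1) \<le> (\<Sum>j\<in>UNIV. us $ j + exp (- (us $ j)) * (1 + SS y x Ws j))"
    proof (rule sum_mono)
      fix j
      have "1 - us $ j \<le> exp (- (us $ j))" using exp_minus_ge by blast
      moreover have "exp (- (us $ j)) \<le> exp (- (us $ j)) * (1 + SS y x Ws j)"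
        using SSpos[of j] by simp
      ultimately show "1 \<le> us $ j + exp (- (us $ j)) * (1 + SS y x Ws j)" by linarith
    qed
    hence "real CARD('n) + \<mu> / 2 * (norm Ws)\<^sup>2 \<le> obj \<mu> y x us Ws"
      unfolding obj_alt by simp
    also have "\<dots> \<le> real CARD('n) * (ln K + 1)" using minimizer o0 by metis
    finally have "(norm Ws)\<^sup>2 \<le> 2 / \<mu> * real CARD('n) * ln K"
      using mu by (simp add: field_simps)
    thus ?thesis unfolding BW_def K_def[symmetric]
      by (simp add: real_le_rsqrt)
  qed
  have Bx: "norm (x i) \<le> Bx" unfolding Bx_def by (rule Max_ge) auto
  have Bx0: "0 \<le> Bx" using Bx norm_ge_zero[of "x i"] by linarith
  have BW0: "BW \<ge> 0" unfolding BW_def using mu K2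
    by (intro real_sqrt_ge_zero mult_nonneg_nonneg) auto
  have term_le: "\<And>k. exp (x i \<bullet> (Ws $ k - Ws $ (y i))) \<le> exp (2 * Bx * BW)"
  proof -
    fix k
    have "x i \<bullet> (Ws $ k - Ws $ (y i)) \<le> norm (x i) * norm (Ws $ k - Ws $ (y i))"
      by (rule norm_cauchy_schwarz)
    also have "\<dots> \<le> Bx * (2 * BW)"
    proof (rule mult_mono)
      have n1: "norm (Ws $ k) \<le> norm Ws" by (rule Finite_Cartesian_Product.norm_nth_le)
      have n2: "norm (Ws $ (y i)) \<le> norm Ws" by (rule Finite_Cartesian_Product.norm_nth_le)
      have "norm (Ws $ k - Ws $ (y i)) \<le> norm (Ws $ k) + norm (Ws $ (y i))"
        by (rule norm_triangle_ineq4)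
      also have "\<dots> \<le> 2 * BW" using n1 n2 Wb by linarith
      finally show "norm (Ws $ k - Ws $ (y i)) \<le> 2 * BW" .
    qed (use Bx BW0 Bx0 in simp_all)
    finally show "exp (x i \<bullet> (Ws $ k - Ws $ (y i))) \<le> exp (2 * Bx * BW)" by simp
  qed
  have "SS y x Ws i \<le> (\<Sum>k\<in>UNIV - {y i}. exp (2 * Bx * BW))"
    unfolding SS_def by (rule sum_mono) (rule term_le)
  also have "\<dots> = (K - 1) * exp (2 * Bx * BW)"
    unfolding K_def by (simp add: card_Diff_singleton)
  finally have "ln (1 + SS y x Ws i) \<le> ln (1 + (K - 1) * exp (2 * Bx * BW))"
    using SSpos[of i] by simp
  with u_le show "us $ i \<le>
     (let Bx = Max (range (\<lambda>j. norm (x j)));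
          BW = sqrt (2 / \<mu> * real CARD('n) * ln (real CARD('k)))
      in ln (1 + (real CARD('k) - 1) * exp (2 * Bx * BW)))"
    unfolding Bx_def BW_def K_def Let_def by simp
qed

end
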